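(* Let $(C,n)$ be a finite-dimensional composition algebra over a field $k$ of characteristic not $2$, with underlying vector space $V$. Then there exist a symmetric composition algebra $S$ with the same underlying quadratic space $(V,n)$ and isometries $f,g\in\mathrm{O}(n)$ such that $C=S_{f,g}$.
   Context: An algebra over $k$ is a $k$-vector space with a bilinear multiplication (not necessarily associative, commutative or unital). For a quadratic form $n$ on $V$, $b_n(x,y)=n(x+y)-n(x)-n(y)$ is its polar bilinear form, and $n$ is non-degenerate if $b_n$ has trivial radical. A composition algebra over $k$ is an algebra $C$ endowed with a non-degenerate quadratic form $n$ such that $n(xy)=n(x)n(y)$ for all $x,y\in C$. It is symmetric if $b_n(xy,z)=b_n(x,yz)$ for all $x,y,z$. $\mathrm{O}(n)$ is the group of linear isometries of $(V,n)$. For an algebra $A$ and linear maps $f,g$ on $A$, the isotope $A_{f,g}$ is the algebra with underlying space $A$ and multiplication $x\cdot y=f(x)g(y)$, where juxtaposition is the multiplication of $A$. *)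

theory Defs
  imports Complex_Main
begin

text \<open>Throughout, the k-vector space V is a type 'v with a scalar multiplication
  scale :: 'k \<Rightarrow> 'v \<Rightarrow> 'v forming a vector space in the sense of the locale
  vector_space; the whole type is the underlying space.\<close>

definition fin_dim :: "('k::field \<Rightarrow> 'v::ab_group_add \<Rightarrow> 'v) \<Rightarrow> bool" where
  "fin_dim scale \<longleftrightarrow> (\<exists>B. finite B \<and> module.span scale B = UNIV)"

definition polar :: "('v::ab_group_add \<Rightarrow> 'k::field) \<Rightarrow> 'v \<Rightarrow> 'v \<Rightarrow> 'k" where
  "polar n x y = n (x + y) - n x - n y"

definition quadratic_form :: "('k::field \<Rightarrow> 'v::ab_group_add \<Rightarrow> 'v) \<Rightarrow> ('v \<Rightarrow> 'k) \<Rightarrow> bool" where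
  "quadratic_form scale n \<longleftrightarrow>
     (\<forall>a x. n (scale a x) = a ^ 2 * n x) \<and>
     (\<forall>x. Vector_Spaces.linear scale (*) (\<lambda>y. polar n x y)) \<and>
     (\<forall>y. Vector_Spaces.linear scale (*) (\<lambda>x. polar n x y))"

definition nondegenerate :: "('v::ab_group_add \<Rightarrow> 'k::field) \<Rightarrow> bool" where
  "nondegenerate n \<longleftrightarrow> (\<forall>x. (\<forall>y. polar n x y = 0) \<longrightarrow> x = 0)"

definition bilinear_mult :: "('k::field \<Rightarrow> 'v::ab_group_add \<Rightarrow> 'v) \<Rightarrow> ('v \<Rightarrow> 'v \<Rightarrow> 'v) \<Rightarrow> bool" where
  "bilinear_mult scale m \<longleftrightarrow>
     (\<forall>x. Vector_Spaces.linear scale scale (m x)) \<and>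
     (\<forall>y. Vector_Spaces.linear scale scale (\<lambda>x. m x y))"

definition composition_algebra ::
  "('k::field \<Rightarrow> 'v::ab_group_add \<Rightarrow> 'v) \<Rightarrow> ('v \<Rightarrow> 'v \<Rightarrow> 'v) \<Rightarrow> ('v \<Rightarrow> 'k) \<Rightarrow> bool" where
  "composition_algebra scale m n \<longleftrightarrow>
     bilinear_mult scale m \<and> quadratic_form scale n \<and> nondegenerate n \<and>
     (\<forall>x y. n (m x y) = n x * n y)"

definition symmetric_composition_algebra ::
  "('k::field \<Rightarrow> 'v::ab_group_add \<Rightarrow> 'v) \<Rightarrow> ('v \<Rightarrow> 'v \<Rightarrow> 'v) \<Rightarrow> ('v \<Rightarrow> 'k) \<Rightarrow> bool" where
  "symmetric_composition_algebra scale m n \<longleftrightarrow>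
     composition_algebra scale m n \<and> (\<forall>x y z. polar n (m x y) z = polar n x (m y z))"

definition orthogonal_group :: "('k::field \<Rightarrow> 'v::ab_group_add \<Rightarrow> 'v) \<Rightarrow> ('v \<Rightarrow> 'k) \<Rightarrow> ('v \<Rightarrow> 'v) set" where
  "orthogonal_group scale n = {f. Vector_Spaces.linear scale scale f \<and> bij f \<and> (\<forall>x. n (f x) = n x)}"

definition isotope :: "('v \<Rightarrow> 'v \<Rightarrow> 'v) \<Rightarrow> ('v \<Rightarrow> 'v) \<Rightarrow> ('v \<Rightarrow> 'v) \<Rightarrow> 'v \<Rightarrow> 'v \<Rightarrow> 'v" where
  "isotope m f g = (\<lambda>x y. m (f x) (g y))"

end

theory Submission
  imports Defs
begin


locale qs = vector_space scale for scale :: "'k::field \<Rightarrow> 'v::ab_group_add \<Rightarrow> 'v" +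
  fixes n :: "'v \<Rightarrow> 'k"
  assumes qf: "quadratic_form scale n"
begin

lemma linL: "module_hom scale (*) (\<lambda>x. polar n x z)"
  using qf unfolding quadratic_form_def by (simp add: module_hom_iff_linear)
lemma linR: "module_hom scale (*) (\<lambda>y. polar n x y)"
  using qf unfolding quadratic_form_def by (simp add: module_hom_iff_linear)

lemma Padd1: "polar n (x + y) z = polar n x z + polar n y z"
  using module_hom.add[OF linL] by metis
lemma Padd2: "polar n z (x + y) = polar n z x + polar n z y"
  using module_hom.add[OF linR] by metis
lemma Pdiff1: "polar n (x - y) z = polar n x z - polar n y z"
  using module_hom.diff[OF linL] by metis
lemma Pdiff2: "polar n z (x - y) = polar n z x - polar n z y"
  using module_hom.diff[OF linR] by metis
lemma Pscale1: "polar n (scale c x) z = c * polar n x z"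
  using module_hom.scale[OF linL] by metis
lemma Pscale2: "polar n z (scale c x) = c * polar n z x"
  using module_hom.scale[OF linR] by metis
lemma Psym: "polar n x y = polar n y x"
  unfolding polar_def by (simp add: add.commute)
lemma nscale: "n (scale a x) = a ^ 2 * n x"
  using qf unfolding quadratic_form_def by blast
lemma nadd: "n (x + y) = n x + n y + polar n x y"
  unfolding polar_def by simp
lemma n0: "n 0 = 0"
  using nscale[of 0 0] by simp
lemma Pself: "polar n x x = 2 * n x"
proof -
  have "scale 2 x = x + x" by (metis scale_left_distrib scale_one one_add_one)
  then have "n (x + x) = 2^2 * n x" using nscale[of 2 x] by simp
  then show ?thesis unfolding polar_def by (simp add: power2_eq_square algebra_simps)
qed
lemma nneg: "n (- x) = n x"
proof -
  have "- x = scale (-1) x" by (metis scale_minus_left scale_one)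
  then show ?thesis using nscale[of "-1" x] by simp
qed

end


locale ca = qs scale n for scale :: "'k::field \<Rightarrow> 'v::ab_group_add \<Rightarrow> 'v" and n +
  fixes p :: "'v \<Rightarrow> 'v \<Rightarrow> 'v"
  assumes bil: "bilinear_mult scale p"
    and mul: "n (p x y) = n x * n y"
begin

lemma mhL: "module_hom scale scale (\<lambda>x. p x y)"
  using bil unfolding bilinear_mult_def by (simp add: module_hom_iff_linear)
lemma mhR: "module_hom scale scale (p x)"
  using bil unfolding bilinear_mult_def by (simp add: module_hom_iff_linear)
lemma padd1: "p (x + w) y = p x y + p w y" using module_hom.add[OF mhL] by metis
lemma padd2: "p y (x + w) = p y x + p y w" using module_hom.add[OF mhR] by metis
lemma pdiff1: "p (x - w) y = p x y - p w y" using module_hom.diff[OF mhL] by metis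
lemma pdiff2: "p y (x - w) = p y x - p y w" using module_hom.diff[OF mhR] by metis
lemma pscale1: "p (scale c x) y = scale c (p x y)" using module_hom.scale[OF mhL] by metis
lemma pscale2: "p y (scale c x) = scale c (p y x)" using module_hom.scale[OF mhR] by metis

lemma lin2: "polar n (p x y) (p w y) = polar n x w * n y"
proof -
  have "n (p (x + w) y) = n (x + w) * n y" by (rule mul)
  then have "n (p x y) + n (p w y) + polar n (p x y) (p w y) = (n x + n w + polar n x w) * n y"
    by (simp add: padd1 nadd)
  then show ?thesis by (simp add: mul algebra_simps)
qed

lemma lin3: "polar n (p x y) (p w z) + polar n (p x z) (p w y) = polar n x w * polar n y z"
proof -
  have "polar n (p x (y + z)) (p w (y + z)) = polar n x w * n (y + z)" by (rule lin2)
  then have "polar n (p x y) (p w y) + polar n (p x z) (p w y) + (polar n (p x y) (p w z) + polar n (p x z) (p w z))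
     = polar n x w * (n y + n z + polar n y z)"
    by (simp add: padd2 Padd1 Padd2 nadd)
  moreover have "polar n (p x y) (p w y) = polar n x w * n y" by (rule lin2)
  moreover have "polar n (p x z) (p w z) = polar n x w * n z" by (rule lin2)
  ultimately show ?thesis by algebra
qed

lemma lin1: "polar n (p x y) (p x z) = n x * polar n y z"
proof -
  have "n (p x (y + z)) = n x * n (y + z)" by (rule mul)
  then have "n (p x y) + n (p x z) + polar n (p x y) (p x z) = n x * (n y + n z + polar n y z)"
    by (simp add: padd2 nadd)
  then show ?thesis by (simp add: mul algebra_simps)
qed

end

locale uca = ca scale n p for scale :: "'k::field \<Rightarrow> 'v::ab_group_add \<Rightarrow> 'v" and n p +
  fixes e :: 'v
  assumes unitL: "p e x = x" and unitR: "p x e = x" and ne: "n e = 1"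
begin

definition cj :: "'v \<Rightarrow> 'v" where "cj x = scale (polar n x e) e - x"

lemma Pee: "polar n e e = 2" using Pself ne by simp
lemma Pcj: "polar n (cj x) e = polar n x e"
proof -
  have "polar n (cj x) e = polar n (scale (polar n x e) e) e - polar n x e" unfolding cj_def by (rule Pdiff1)
  also have "\<dots> = polar n x e * 2 - polar n x e" by (simp only: Pscale1 Pee)
  finally show ?thesis by (simp add: algebra_simps)
qed
lemma cjcj: "cj (cj x) = x"
  unfolding cj_def[of "cj x"] Pcj by (simp add: cj_def)
lemma ncj: "n (cj x) = n x"
proof -
  let ?t = "polar n x e"
  have "scale ?t e + - x = cj x" unfolding cj_def by simp
  moreover have "n (scale ?t e + - x) = n (scale ?t e) + n (- x) + polar n (scale ?t e) (- x)" by (rule nadd)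
  ultimately have "n (cj x) = n (scale ?t e) + n (- x) + polar n (scale ?t e) (- x)" by simp
  also have "polar n (scale ?t e) (- x) = - ?t * ?t"
    using Pdiff2[of "scale ?t e" 0 x] Pscale1[of ?t e x] Psym[of e x] Pdiff2[of "scale ?t e" 0 0] by simp
  also have "n (scale ?t e) = ?t * ?t" using nscale ne by (simp add: power2_eq_square)
  finally show ?thesis using nneg by simp
qed

lemma I1: "polar n (p x y) z = polar n x e * polar n y z - polar n (p x z) y"
  using lin3[of x y e z] by (simp add: unitL algebra_simps)
lemma I2: "polar n (p x z) w = polar n x w * polar n z e - polar n x (p w z)"
  using lin3[of x z w e] by (simp add: unitR algebra_simps)

lemma symm: "polar n (p (cj x) (cj y)) z = polar n x (p (cj y) (cj z))"
proof -
  let ?t = "polar n x e" and ?s = "polar n z e"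
  have "polar n (p (cj x) (cj y)) z = ?t * polar n (cj y) z - polar n (p (cj x) z) (cj y)"
    using I1[of "cj x" "cj y" z] Pcj by simp
  also have "p (cj x) z = scale ?t z - p x z" unfolding cj_def by (simp add: pdiff1 pscale1 unitL)
  finally have L: "polar n (p (cj x) (cj y)) z = polar n (p x z) (cj y)"
    by (simp add: Pdiff1 Pscale1 Psym[of z "cj y"])
  have "p (cj y) (cj z) = scale ?s (cj y) - p (cj y) z" unfolding cj_def[of z] by (simp add: pdiff2 pscale2 unitR)
  then have R: "polar n x (p (cj y) (cj z)) = ?s * polar n x (cj y) - polar n x (p (cj y) z)"
    by (simp add: Pdiff2 Pscale2)
  have "polar n x (p (cj y) z) + polar n (p (cj x) (cj y)) z = ?s * polar n x (cj y)"
    using L I2[of x z "cj y"] by (simp add: algebra_simps)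
  moreover have "polar n x (p (cj y) z) + polar n x (p (cj y) (cj z)) = ?s * polar n x (cj y)"
    using R by (simp add: algebra_simps)
  ultimately show ?thesis by (metis add_left_cancel)
qed

lemma cj_mh: "module_hom scale scale cj"
  unfolding module_hom_def module_hom_axioms_def
  by (auto simp: cj_def Padd1 Pscale1 scale_left_distrib scale_right_distrib scale_right_diff_distrib
      algebra_simps module_axioms)

end


lemma mh_comp: "module_hom s s f \<Longrightarrow> module_hom s s g \<Longrightarrow> module_hom s s (\<lambda>x. f (g x))"
  by (auto simp: module_hom_iff)

lemma mh_inv:
  assumes "module_hom s s f" "bij f"
  shows "module_hom s s (inv f)"
proof -
  have fi: "\<And>x. f (inv f x) = x" using assms(2) by (simp add: bij_is_surj surj_f_inv_f)
  have if_: "\<And>x. inv f (f x) = x" using assms(2) by (simp add: bij_is_inj inv_f_f)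
  have "inv f (x + y) = inv f x + inv f y" for x y
  proof -
    have "inv f (x + y) = inv f (f (inv f x) + f (inv f y))" by (simp add: fi)
    also have "\<dots> = inv f (f (inv f x + inv f y))" using module_hom.add[OF assms(1)] by metis
    finally show ?thesis by (simp add: if_)
  qed
  moreover have "inv f (s c x) = s c (inv f x)" for c x
  proof -
    have "inv f (s c x) = inv f (s c (f (inv f x)))" by (simp add: fi)
    also have "\<dots> = inv f (f (s c (inv f x)))" using module_hom.scale[OF assms(1)] by metis
    finally show ?thesis by (simp add: if_)
  qed
  ultimately show ?thesis using assms(1) by (auto simp: module_hom_iff)
qed

context ca begin

lemma P0: "polar n 0 z = 0" using Pscale1[of 0 0 z] by simp

lemma injL:
  assumes "nondegenerate n" "n a \<noteq> 0"
  shows "inj (p a)"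
proof (rule injI)
  fix x y assume "p a x = p a y"
  then have h: "p a (x - y) = 0" by (simp add: pdiff2)
  have "n a * polar n (x - y) z = 0" for z using lin1[of a "x - y" z] h P0 by simp
  then have "polar n (x - y) z = 0" for z using assms(2) by simp
  then have "x - y = 0" using assms(1) unfolding nondegenerate_def by blast
  then show "x = y" by simp
qed

lemma injR:
  assumes "nondegenerate n" "n a \<noteq> 0"
  shows "inj (\<lambda>x. p x a)"
proof (rule injI)
  fix x y assume "p x a = p y a"
  then have h: "p (x - y) a = 0" by (simp add: pdiff1)
  have "polar n (x - y) z * n a = 0" for z using lin2[of "x - y" a z] h P0 by simp
  then have "polar n (x - y) z = 0" for z using assms(2) by simp
  then have "x - y = 0" using assms(1) unfolding nondegenerate_def by blast
  then show "x = y" by simp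
qed

end

theorem mainTheorem1:
  fixes scale :: "'k::field \<Rightarrow> 'v::ab_group_add \<Rightarrow> 'v"
    and mult :: "'v \<Rightarrow> 'v \<Rightarrow> 'v"
    and n :: "'v \<Rightarrow> 'k"
  assumes "vector_space scale"
    and "fin_dim scale"
    and "(2::'k) \<noteq> 0"
    and "composition_algebra scale mult n"
  shows "\<exists>s f g. symmetric_composition_algebra scale s n \<and>
           f \<in> orthogonal_group scale n \<and> g \<in> orthogonal_group scale n \<and>
           mult = isotope s f g"
proof -
  from assms(4) have bil: "bilinear_mult scale mult" and qf: "quadratic_form scale n"
    and nd: "nondegenerate n" and mul: "\<And>x y. n (mult x y) = n x * n y"
    unfolding composition_algebra_def by auto
  interpret c: ca scale n mult
    using assms(1) qf bil mul by (simp add: ca_def qs_def qs_axioms_def ca_axioms_def)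
  have modS: "module scale" using assms(1) by (simp add: module_iff_vector_space)
  have idlin: "Vector_Spaces.linear scale scale id"
    using modS by (simp add: module_hom_iff_linear[symmetric] module_hom_iff)
  show ?thesis
  proof (cases "\<forall>x::'v. x = 0")
    case True
    have o: "id \<in> orthogonal_group scale n" unfolding orthogonal_group_def using idlin by auto
    have "symmetric_composition_algebra scale mult n"
      unfolding symmetric_composition_algebra_def using assms(4) True by metis
    moreover have "mult = isotope mult id id" unfolding isotope_def by simp
    ultimately show ?thesis using o by blast
  next
    case False
    then obtain x0 :: 'v where "x0 \<noteq> 0" by blast
    with nd obtain y0 where "polar n x0 y0 \<noteq> 0" unfolding nondegenerate_def by blast
    then obtain b where nb: "n b \<noteq> 0" unfolding polar_def by force
    obtain B0 where B0: "finite B0" "module.span scale B0 = UNIV"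
      using assms(2) unfolding fin_dim_def by blast
    obtain B where B: "c.independent B" "UNIV \<subseteq> module.span scale B"
      using c.basis_exists[of UNIV] by blast
    have fB: "finite B" using c.independent_span_bound[OF B0(1) B(1)] B0(2) by auto
    interpret fd: finite_dimensional_vector_space scale B
      using assms(1) fB B by (simp add: finite_dimensional_vector_space_def
          finite_dimensional_vector_space_axioms_def set_eq_subset)
    have linL: "Vector_Spaces.linear scale scale (mult x)" for x using bil unfolding bilinear_mult_def by blast
    have linR: "Vector_Spaces.linear scale scale (\<lambda>y. mult y x)" for x using bil unfolding bilinear_mult_def by blast
    have surjR: "surj (\<lambda>y. mult y x)" if "n x \<noteq> 0" for x
      by (intro fd.linear_inj_imp_surj linR c.injR nd that)
    have surjL: "surj (mult x)" if "n x \<noteq> 0" for x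
      by (intro fd.linear_inj_imp_surj linL c.injL nd that)
    obtain a where "mult a b = b"
    proof -
      have "b \<in> range (\<lambda>y. mult y b)" using surjR[OF nb] by simp
      then obtain y where "b = mult y b" by blast
      then show ?thesis by (intro that[of y]) (rule sym)
    qed
    then have "n a * n b = n b" using mul by metis
    then have na: "n a = 1" using nb by simp
    define Ra where "Ra = (\<lambda>y. mult y a)"
    define La where "La = mult a"
    have bRa: "bij Ra" unfolding Ra_def using surjR c.injR[OF nd] na by (simp add: bij_def)
    have bLa: "bij La" unfolding La_def using surjL c.injL[OF nd] na by (simp add: bij_def)
    define Ri where "Ri = inv Ra"
    define Li where "Li = inv La"
    have RRi: "Ra (Ri x) = x" for x unfolding Ri_def using bRa by (simp add: bij_is_surj surj_f_inv_f)
    have RiR: "Ri (Ra x) = x" for x unfolding Ri_def using bRa by (simp add: bij_is_inj inv_f_f)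
    have LLi: "La (Li x) = x" for x unfolding Li_def using bLa by (simp add: bij_is_surj surj_f_inv_f)
    have LiL: "Li (La x) = x" for x unfolding Li_def using bLa by (simp add: bij_is_inj inv_f_f)
    have mhRa: "module_hom scale scale Ra" unfolding Ra_def using linR by (simp add: module_hom_iff_linear)
    have mhLa: "module_hom scale scale La" unfolding La_def using linL by (simp add: module_hom_iff_linear)
    have mhRi: "module_hom scale scale Ri" unfolding Ri_def using mh_inv[OF mhRa bRa] .
    have mhLi: "module_hom scale scale Li" unfolding Li_def using mh_inv[OF mhLa bLa] .
    have nRi: "n (Ri x) = n x" for x
      using mul[of "Ri x" a] RRi[of x] na unfolding Ra_def by simp
    have nLi: "n (Li x) = n x" for x
      using mul[of a "Li x"] LLi[of x] na unfolding La_def by simp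
    define q where "q = (\<lambda>x y. mult (Ri x) (Li y))"
    define e where "e = mult a a"
    have mhq1: "module_hom scale scale (q x)" for x
      unfolding q_def using mh_comp[OF c.mhR mhLi] .
    have mhq2: "module_hom scale scale (\<lambda>x. q x y)" for y
      unfolding q_def using mh_comp[OF c.mhL mhRi] .
    have bilq: "bilinear_mult scale q"
      unfolding bilinear_mult_def using mhq1 mhq2 by (simp add: module_hom_iff_linear)
    have mulq: "n (q x y) = n x * n y" for x y unfolding q_def by (simp add: mul nRi nLi)
    have eR: "Ri e = a" using RiR[of a] unfolding e_def Ra_def .
    have eL: "Li e = a" using LiL[of a] unfolding e_def La_def .
    interpret u: uca scale n q e
      apply (rule uca.intro)
      subgoal using assms(1) qf bilq mulq by (simp add: ca_def qs_def qs_axioms_def ca_axioms_def)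
      subgoal unfolding uca_axioms_def q_def using eR eL LLi RRi na
        by (simp add: La_def Ra_def e_def mul)
      done
    define S where "S = (\<lambda>x y. q (u.cj x) (u.cj y))"
    define f where "f = (\<lambda>x. u.cj (Ra x))"
    define g where "g = (\<lambda>x. u.cj (La x))"
    have bcj: "bij u.cj"
      unfolding bij_def inj_def surj_def by (metis u.cjcj)
    have mhS1: "module_hom scale scale (S x)" for x
      unfolding S_def using mh_comp[OF mhq1 u.cj_mh] .
    have mhS2: "module_hom scale scale (\<lambda>x. S x y)" for y
      unfolding S_def using mh_comp[OF mhq2 u.cj_mh] .
    have sca: "symmetric_composition_algebra scale S n"
      unfolding symmetric_composition_algebra_def composition_algebra_def bilinear_mult_def
      using mhS1 mhS2 qf nd u.symm
      by (simp add: module_hom_iff_linear S_def mulq u.ncj)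
    have of: "f \<in> orthogonal_group scale n"
      unfolding orthogonal_group_def f_def
      using mh_comp[OF u.cj_mh mhRa] bij_comp[OF bRa bcj]
      by (simp add: module_hom_iff_linear comp_def u.ncj Ra_def mul na)
    have og: "g \<in> orthogonal_group scale n"
      unfolding orthogonal_group_def g_def
      using mh_comp[OF u.cj_mh mhLa] bij_comp[OF bLa bcj]
      by (simp add: module_hom_iff_linear comp_def u.ncj La_def mul na)
    have "mult = isotope S f g"
      unfolding isotope_def S_def f_def g_def q_def by (simp add: u.cjcj RiR LiL)
    then show ?thesis using sca of og by blast
  qed
qed

end
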